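(* Let $\lambda\neq\mu$ be partitions of $n$. Then the irreducible $S_n$-representations $V_\lambda$ and $V_\mu$ have different sign signatures.
   Context: $V_\lambda$ is the irreducible complex representation of $S_n$ indexed by the partition $\lambda$ in the standard way ($V_{[1,\dots,1]}$ the sign representation). The sign signature of a representation $V$ of $S_n$ is the set of parabolic subgroups $P$ (subgroups generated by subsets of the simple transpositions $(i,i+1)$, i.e. products $S_{p_1}\times\cdots\times S_{p_k}$ of symmetric groups on consecutive blocks of indices) such that $\dim\operatorname{Hom}_P(\operatorname{sgn}_P,V)>0$, where $\operatorname{sgn}_P$ is the sign representation of $P$. *)

theory Defs
  imports Complex_Main "HOL-Combinatorics.Combinatorics"
begin

text \<open>S_n acts on {0..<n}; permutations are functions nat => nat permuting {0..<n}.\<close>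

definition is_partition :: "nat \<Rightarrow> nat list \<Rightarrow> bool" where
  "is_partition n la \<longleftrightarrow> sorted_wrt (\<ge>) la \<and> 0 \<notin> set la \<and> sum_list la = n"

definition cells :: "nat list \<Rightarrow> (nat \<times> nat) set" where
  "cells la = {(i, j). i < length la \<and> j < la ! i}"

definition tableaux :: "nat \<Rightarrow> nat list \<Rightarrow> (nat \<times> nat \<Rightarrow> nat) set" where
  "tableaux n la = {t. bij_betw t (cells la) {0..<n}}"

text \<open>A tabloid is encoded as a row-assignment function T :: nat => nat
  (element x lies in row T x; T x = 0 for x >= n).
  The row tabloid {t} of a tableau t.\<close>
definition row_tabloid :: "nat \<Rightarrow> nat list \<Rightarrow> (nat \<times> nat \<Rightarrow> nat) \<Rightarrow> nat \<Rightarrow> nat" where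
  "row_tabloid n la t = (\<lambda>x. if x < n then fst (inv_into (cells la) t x) else 0)"

definition col_group :: "nat \<Rightarrow> nat list \<Rightarrow> (nat \<times> nat \<Rightarrow> nat) \<Rightarrow> (nat \<Rightarrow> nat) set" where
  "col_group n la t = {p. p permutes {0..<n} \<and>
      (\<forall>x<n. snd (inv_into (cells la) t (p x)) = snd (inv_into (cells la) t x))}"

text \<open>Permutation action on the permutation module M^la (functions on tabloids):
  sigma . T = T o inv sigma, hence (sigma . f) T = f (T o sigma).\<close>
definition perm_act :: "(nat \<Rightarrow> nat) \<Rightarrow> ((nat \<Rightarrow> nat) \<Rightarrow> complex) \<Rightarrow> ((nat \<Rightarrow> nat) \<Rightarrow> complex)" where
  "perm_act s f = (\<lambda>T. f (T \<circ> s))"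

definition polytabloid :: "nat \<Rightarrow> nat list \<Rightarrow> (nat \<times> nat \<Rightarrow> nat) \<Rightarrow> (nat \<Rightarrow> nat) \<Rightarrow> complex" where
  "polytabloid n la t = (\<lambda>T. \<Sum>p\<in>col_group n la t.
      of_int (sign p) * (if T = row_tabloid n la t \<circ> inv p then 1 else 0))"

text \<open>Specht module S^la = complex span of the polytabloids; this is V_la
  in the standard indexing (S^(n) trivial, S^(1^n) sign).\<close>
definition specht :: "nat \<Rightarrow> nat list \<Rightarrow> ((nat \<Rightarrow> nat) \<Rightarrow> complex) set" where
  "specht n la = {v. \<exists>S c. finite S \<and> S \<subseteq> tableaux n la \<and>
      v = (\<lambda>T. \<Sum>t\<in>S. c t * polytabloid n la t T)}"

text \<open>Parabolic subgroup generated by simple transpositions (i, i+1), i in J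
  (0-indexed, Suc i < n). Closure under composition suffices in a finite group.\<close>
inductive_set parabolic :: "nat set \<Rightarrow> (nat \<Rightarrow> nat) set" for J where
  par_id: "id \<in> parabolic J"
| par_step: "p \<in> parabolic J \<Longrightarrow> i \<in> J \<Longrightarrow> transpose i (Suc i) \<circ> p \<in> parabolic J"

text \<open>Sign signature: parabolic P with Hom_P(sgn_P, V) nonzero, i.e. V contains a
  nonzero vector on which P acts by the sign character.\<close>
definition sign_signature :: "nat \<Rightarrow> ((nat \<Rightarrow> nat) \<Rightarrow> complex) set \<Rightarrow> (nat \<Rightarrow> nat) set set" where
  "sign_signature n V = {parabolic J | J. J \<subseteq> {i. Suc i < n} \<and>
      (\<exists>v\<in>V. v \<noteq> (\<lambda>T. 0) \<and> (\<forall>s\<in>parabolic J. perm_act s v = (\<lambda>T. of_int (sign s) * v T)))}"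

end

theory Submission
  imports Defs
begin


lemma colgrp_perm: "p \<in> col_group n la t \<Longrightarrow> p permutes {0..<n}"
  by (simp add: col_group_def)

lemma colgrp_comp:
  assumes "s \<in> col_group n la t" "p \<in> col_group n la t"
  shows "s \<circ> p \<in> col_group n la t"
proof -
  have ps: "s permutes {0..<n}" "p permutes {0..<n}" using assms by (auto simp: col_group_def)
  have "p x < n" if "x < n" for x using permutes_in_image[OF ps(2)] that by auto
  then show ?thesis using assms ps by (auto simp: col_group_def permutes_compose)
qed

lemma colgrp_inv:
  assumes "s \<in> col_group n la t"
  shows "inv s \<in> col_group n la t"
proof -
  have ps: "s permutes {0..<n}" using assms by (auto simp: col_group_def)
  have "snd (inv_into (cells la) t (inv s x)) = snd (inv_into (cells la) t x)" if "x < n" for x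
  proof -
    have "inv s x < n" using permutes_in_image[OF permutes_inv[OF ps]] that by auto
    then have "snd (inv_into (cells la) t (s (inv s x))) = snd (inv_into (cells la) t (inv s x))"
      using assms by (auto simp: col_group_def)
    then show ?thesis using permutes_inverses(1)[OF ps] by simp
  qed
  then show ?thesis using permutes_inv[OF ps] by (auto simp: col_group_def)
qed

lemma perm_sign_mult:
  assumes "p permutes {0..<(n::nat)}" "q permutes {0..<n}"
  shows "sign (p \<circ> q) = sign p * sign q"
  using assms by (meson finite_atLeastLessThan permutation_permutes sign_compose)

lemma polytabloid_act:
  assumes s: "s \<in> col_group n la t"
  shows "perm_act s (polytabloid n la t) = (\<lambda>T. of_int (sign s) * polytabloid n la t T)"
proof
  fix T :: "nat \<Rightarrow> nat"
  let ?C = "col_group n la t"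
  let ?R = "row_tabloid n la t"
  have ps: "s permutes {0..<n}" using s by (simp add: col_group_def)
  have eq: "(T \<circ> s = ?R \<circ> inv p) \<longleftrightarrow> (T = ?R \<circ> inv (s \<circ> p))" if "p \<in> ?C" for p
  proof -
    have pp: "p permutes {0..<n}" using that by (simp add: col_group_def)
    have i: "inv (s \<circ> p) = inv p \<circ> inv s"
      using o_inv_distrib permutes_bij pp ps by blast
    show ?thesis
    proof
      assume "T \<circ> s = ?R \<circ> inv p"
      then have "T \<circ> s \<circ> inv s = ?R \<circ> inv p \<circ> inv s" by simp
      then show "T = ?R \<circ> inv (s \<circ> p)" using permutes_inv_o(1)[OF ps] i
        by (simp add: o_assoc[symmetric])
    next
      assume "T = ?R \<circ> inv (s \<circ> p)"
      then have "T \<circ> s = ?R \<circ> inv p \<circ> inv s \<circ> s" using i by (simp add: o_assoc)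
      then show "T \<circ> s = ?R \<circ> inv p" using permutes_inv_o(2)[OF ps]
        by (simp add: o_assoc[symmetric])
    qed
  qed
  have "perm_act s (polytabloid n la t) T =
     (\<Sum>p\<in>?C. of_int (sign p) * (if T = ?R \<circ> inv (s \<circ> p) then 1 else 0))"
    unfolding perm_act_def polytabloid_def using eq by (intro sum.cong) auto
  also have "\<dots> = (\<Sum>q\<in>?C. of_int (sign s) * (of_int (sign q) * (if T = ?R \<circ> inv q then 1 else 0)))"
  proof (rule sum.reindex_bij_witness[where i = "\<lambda>q. inv s \<circ> q" and j = "\<lambda>p. s \<circ> p"])
    fix q assume q: "q \<in> ?C"
    show "inv s \<circ> q \<in> ?C" by (rule colgrp_comp[OF colgrp_inv[OF s] q])
    show "s \<circ> (inv s \<circ> q) = q" using permutes_inv_o(1)[OF ps] by (simp add: o_assoc)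
  next
    fix p assume p: "p \<in> ?C"
    show "s \<circ> p \<in> ?C" by (rule colgrp_comp[OF s p])
    show "inv s \<circ> (s \<circ> p) = p" using permutes_inv_o(2)[OF ps] by (simp add: o_assoc)
    have pp: "p permutes {0..<n}" using p by (simp add: col_group_def)
    have "sign (s \<circ> p) = sign s * sign p" using perm_sign_mult[OF ps pp] .
    then show "of_int (sign s) * (of_int (sign (s \<circ> p)) * (if T = ?R \<circ> inv (s \<circ> p) then 1 else 0)) =
      of_int (sign p) * (if T = ?R \<circ> inv (s \<circ> p) then (1::complex) else 0)"
    proof -
      have "of_int (sign s) * of_int (sign (s \<circ> p)) = (of_int (sign p) :: complex)"
        unfolding \<open>sign (s \<circ> p) = sign s * sign p\<close> of_int_mult[symmetric] mult.assoc[symmetric] sign_idempotent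
        by simp
      then show ?thesis by (metis (no_types, lifting) mult.assoc)
    qed
  qed
  also have "\<dots> = of_int (sign s) * polytabloid n la t T"
    unfolding polytabloid_def by (simp add: sum_distrib_left)
  finally show "perm_act s (polytabloid n la t) T = of_int (sign s) * polytabloid n la t T" .
qed

lemma polytabloid_nz:
  assumes t: "bij_betw t (cells la) {0..<n}"
  shows "polytabloid n la t (row_tabloid n la t) = 1"
proof -
  let ?C = "col_group n la t"
  let ?R = "row_tabloid n la t"
  have key: "p = id" if p: "p \<in> ?C" and e: "?R = ?R \<circ> inv p" for p
  proof -
    have pp: "p permutes {0..<n}" using p by (simp add: col_group_def)
    have "inv p x = x" for x
    proof (cases "x < n")
      case True
      let ?y = "inv p x"
      have y: "?y < n" using permutes_in_image[OF permutes_inv[OF pp]] True by auto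
      have "?R ?y = ?R x" using fun_cong[OF e, of x] by simp
      then have r: "fst (inv_into (cells la) t ?y) = fst (inv_into (cells la) t x)"
        using y True by (simp add: row_tabloid_def)
      have "snd (inv_into (cells la) t (p ?y)) = snd (inv_into (cells la) t ?y)"
        using p y by (auto simp: col_group_def)
      then have c: "snd (inv_into (cells la) t ?y) = snd (inv_into (cells la) t x)"
        using permutes_inverses(1)[OF pp] by simp
      have "inv_into (cells la) t ?y = inv_into (cells la) t x" using r c by (simp add: prod_eq_iff)
      then have "t (inv_into (cells la) t ?y) = t (inv_into (cells la) t x)" by simp
      moreover have "?y \<in> t ` cells la" "x \<in> t ` cells la" using t y True by (auto simp: bij_betw_def)
      ultimately show ?thesis by (simp add: f_inv_into_f)
    next
      case False
      then show ?thesis using permutes_inv[OF pp] by (simp add: permutes_def)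
    qed
    then have "inv p = id" by auto
    then show ?thesis by (metis inv_id pp permutes_inv_inv)
  qed
  have idC: "id \<in> ?C" by (simp add: col_group_def permutes_id)
  have "polytabloid n la t ?R = (\<Sum>p\<in>?C. if p = id then 1 else 0)"
    unfolding polytabloid_def
    by (intro sum.cong refl) (auto dest: key)
  also have "\<dots> = 1"
  proof -
    have "finite ?C" by (rule finite_subset[OF _ finite_permutations[of "{0..<n}"]]) (auto simp: col_group_def)
    then show ?thesis using idC by (simp add: sum.delta)
  qed
  finally show ?thesis .
qed



definition colsz :: "nat list \<Rightarrow> nat \<Rightarrow> nat" where
  "colsz la j = card {i. i < length la \<and> j < la ! i}"
definition Fs :: "nat list \<Rightarrow> nat \<Rightarrow> nat" where
  "Fs la k = (\<Sum>j<k. colsz la j)"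
definition tab :: "nat list \<Rightarrow> nat \<times> nat \<Rightarrow> nat" where
  "tab la = (\<lambda>(i, j). Fs la j + i)"
definition colof :: "nat list \<Rightarrow> nat \<Rightarrow> nat" where
  "colof la x = snd (inv_into (cells la) (tab la) x)"
definition Jl :: "nat \<Rightarrow> nat list \<Rightarrow> nat set" where
  "Jl n la = {i. Suc i < n \<and> colof la i = colof la (Suc i)}"

lemma downclosed_eq:
  assumes "finite S" "\<And>i i'. i \<in> S \<Longrightarrow> i' \<le> i \<Longrightarrow> i' \<in> S"
  shows "(i \<in> S) \<longleftrightarrow> i < card (S::nat set)"
proof
  assume "i \<in> S"
  then have "{..i} \<subseteq> S" using assms(2) by auto
  then have "card {..i} \<le> card S" using assms(1) by (rule card_mono[rotated])
  then show "i < card S" by simp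
next
  assume i: "i < card S"
  show "i \<in> S"
  proof (rule ccontr)
    assume "i \<notin> S"
    then have "S \<subseteq> {..<i}" using assms(2) by (meson lessThan_iff not_le_imp_less subsetI)
    then have "card S \<le> i" by (metis card_lessThan card_mono finite_lessThan)
    then show False using i by simp
  qed
qed

lemma colsz_iff:
  assumes "sorted_wrt (\<ge>) la"
  shows "i < colsz la j \<longleftrightarrow> i < length la \<and> j < la ! i"
proof -
  let ?S = "{i. i < length la \<and> j < la ! i}"
  have "finite ?S" by simp
  moreover have "i' \<in> ?S" if "i \<in> ?S" "i' \<le> i" for i i'
  proof (cases "i' = i")
    case False
    then have "i' < i" using that by simp
    then have "la ! i \<le> la ! i'" using assms that(1) by (auto simp: sorted_wrt_iff_nth_less)
    then show ?thesis using that by auto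
  qed (use that in auto)
  ultimately show ?thesis unfolding colsz_def using downclosed_eq[of ?S i] by blast
qed

lemma Fs_Suc: "Fs la (Suc k) = Fs la k + colsz la k"
  by (simp add: Fs_def)

lemma Fs_mono: "k \<le> k' \<Longrightarrow> Fs la k \<le> Fs la k'"
  unfolding Fs_def by (rule sum_mono2) auto

lemma Fs_min: "Fs la k = (\<Sum>i<length la. min (la ! i) k)"
proof (induction k)
  case 0
  then show ?case by (simp add: Fs_def)
next
  case (Suc k)
  have m: "min (la ! i) (Suc k) = min (la ! i) k + (if k < la ! i then 1 else 0)" for i by auto
  have "(\<Sum>i<length la. min (la ! i) (Suc k)) =
        (\<Sum>i<length la. min (la ! i) k) + (\<Sum>i<length la. if k < la ! i then 1 else 0)"
    unfolding m by (simp add: sum.distrib)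
  also have "(\<Sum>i<length la. if k < la ! i then 1 else 0) = card ({..<length la} \<inter> {i. k < la ! i})"
    by (simp add: sum.If_cases)
  also have "{..<length la} \<inter> {i. k < la ! i} = {i. i < length la \<and> k < la ! i}" by auto
  finally show ?case using Suc by (simp add: Fs_Suc colsz_def)
qed

lemma Fs_le:
  assumes "is_partition n la"
  shows "Fs la k \<le> n"
proof -
  have "Fs la k \<le> (\<Sum>i<length la. la ! i)" unfolding Fs_min by (rule sum_mono) simp
  also have "\<dots> = n" using assms by (simp add: is_partition_def sum_list_sum_nth atLeast0LessThan)
  finally show ?thesis .
qed

lemma Fs_n:
  assumes "is_partition n la"
  shows "Fs la n = n"
proof -
  have le: "la ! i \<le> n" if "i < length la" for i
    using assms member_le_sum_list[of "la ! i" la] that by (simp add: is_partition_def)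
  have "Fs la n = (\<Sum>i<length la. la ! i)" unfolding Fs_min
    by (rule sum.cong) (auto simp: le min_absorb1)
  also have "\<dots> = n" using assms by (simp add: is_partition_def sum_list_sum_nth atLeast0LessThan)
  finally show ?thesis .
qed

lemma find_interval:
  fixes f :: "nat \<Rightarrow> nat"
  shows "f 0 \<le> x \<Longrightarrow> x < f m \<Longrightarrow> \<exists>j<m. f j \<le> x \<and> x < f (Suc j)"
proof (induction m)
  case 0 then show ?case by simp
next
  case (Suc m)
  show ?case
  proof (cases "x < f m")
    case True then show ?thesis using Suc by (meson less_SucI)
  next
    case False then show ?thesis using Suc by (metis lessI not_less)
  qed
qed

lemma tab_bij:
  assumes p: "is_partition n la"
  shows "bij_betw (tab la) (cells la) {0..<n}"
proof -
  have srt: "sorted_wrt (\<ge>) la" using p by (simp add: is_partition_def)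
  have inj: "inj_on (tab la) (cells la)"
  proof (rule inj_onI)
    fix a b assume a: "a \<in> cells la" and b: "b \<in> cells la" and e: "tab la a = tab la b"
    obtain i j where ij: "a = (i, j)" by force
    obtain i' j' where ij': "b = (i', j')" by force
    have ci: "i < colsz la j" using a ij colsz_iff[OF srt] by (simp add: cells_def)
    have ci': "i' < colsz la j'" using b ij' colsz_iff[OF srt] by (simp add: cells_def)
    have e': "Fs la j + i = Fs la j' + i'" using e ij ij' by (simp add: tab_def)
    have "j = j'"
    proof (rule ccontr)
      assume "j \<noteq> j'"
      then consider "j < j'" | "j' < j" by linarith
      then show False
      proof cases
        case 1
        then have "Fs la (Suc j) \<le> Fs la j'" by (intro Fs_mono) simp
        then show False using e' ci by (simp add: Fs_Suc)
      next
        case 2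
        then have "Fs la (Suc j') \<le> Fs la j" by (intro Fs_mono) simp
        then show False using e' ci' by (simp add: Fs_Suc)
      qed
    qed
    then show "a = b" using e' ij ij' by simp
  qed
  have img: "tab la ` cells la = {0..<n}"
  proof
    show "tab la ` cells la \<subseteq> {0..<n}"
    proof
      fix x assume "x \<in> tab la ` cells la"
      then obtain i j where c: "(i, j) \<in> cells la" and x: "x = Fs la j + i" by (auto simp: tab_def)
      have "i < colsz la j" using c colsz_iff[OF srt] by (simp add: cells_def)
      then have "x < Fs la (Suc j)" using x by (simp add: Fs_Suc)
      then show "x \<in> {0..<n}" using Fs_le[OF p] by (metis atLeastLessThan_iff le_trans not_le zero_le)
    qed
  next
    show "{0..<n} \<subseteq> tab la ` cells la"
    proof
      fix x assume "x \<in> {0..<n}"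
      then have "x < Fs la n" using Fs_n[OF p] by simp
      then obtain j where j: "Fs la j \<le> x" "x < Fs la (Suc j)"
        using find_interval[of "Fs la" x n] by (auto simp: Fs_def)
      have "x - Fs la j < colsz la j" using j by (simp add: Fs_Suc)
      then have "(x - Fs la j, j) \<in> cells la" using colsz_iff[OF srt] by (simp add: cells_def)
      moreover have "tab la (x - Fs la j, j) = x" using j by (simp add: tab_def)
      ultimately show "x \<in> tab la ` cells la" by force
    qed
  qed
  show ?thesis using inj img by (simp add: bij_betw_def)
qed

lemma colof_prop:
  assumes p: "is_partition n la" and x: "x < n"
  shows "Fs la (colof la x) \<le> x \<and> x < Fs la (Suc (colof la x))"
proof -
  have b: "bij_betw (tab la) (cells la) {0..<n}" by (rule tab_bij[OF p])
  have srt: "sorted_wrt (\<ge>) la" using p by (simp add: is_partition_def)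
  have "x \<in> tab la ` cells la" using b x by (simp add: bij_betw_def)
  then have c: "inv_into (cells la) (tab la) x \<in> cells la" "tab la (inv_into (cells la) (tab la) x) = x"
    by (auto simp: inv_into_into f_inv_into_f)
  obtain i j where ij: "inv_into (cells la) (tab la) x = (i, j)" by force
  have "i < colsz la j" using c(1) ij colsz_iff[OF srt] by (simp add: cells_def)
  then show ?thesis using c(2) ij by (simp add: colof_def tab_def Fs_Suc)
qed

lemma colof_mono:
  assumes p: "is_partition n la" and "x \<le> y" "y < n"
  shows "colof la x \<le> colof la y"
proof (rule ccontr)
  assume "\<not> ?thesis"
  then have "Fs la (Suc (colof la y)) \<le> Fs la (colof la x)" by (intro Fs_mono) simp
  moreover have "x < n" using assms by simp
  ultimately show False using colof_prop[OF p, of x] colof_prop[OF p, of y] assms by linarith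
qed

lemma colof_lt:
  assumes p: "is_partition n la" and "x < Fs la k"
  shows "colof la x < k"
proof (rule ccontr)
  assume "\<not> ?thesis"
  then have "Fs la k \<le> Fs la (colof la x)" by (intro Fs_mono) simp
  moreover have "x < n" using assms Fs_le[OF p, of k] by simp
  ultimately show False using colof_prop[OF p, of x] assms by linarith
qed



lemma par_comp: "p \<in> parabolic J \<Longrightarrow> q \<in> parabolic J \<Longrightarrow> p \<circ> q \<in> parabolic J"
proof (induction p rule: parabolic.induct)
  case par_id then show ?case by simp
next
  case (par_step p i)
  then have "transpose i (Suc i) \<circ> (p \<circ> q) \<in> parabolic J" by (intro parabolic.par_step) blast+
  then show ?case by (simp only: o_assoc)
qed

lemma transp_par:
  assumes "a < b" "\<And>x. a \<le> x \<Longrightarrow> x < b \<Longrightarrow> x \<in> J"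
  shows "transpose a b \<in> parabolic J"
  using assms
proof (induction b)
  case 0 then show ?case by simp
next
  case (Suc b)
  show ?case
  proof (cases "a = b")
    case True
    then have "transpose a (Suc a) \<circ> id \<in> parabolic J"
      using Suc.prems by (intro parabolic.par_step parabolic.par_id) auto
    then show ?thesis using True by simp
  next
    case False
    then have ab: "a < b" using Suc.prems by simp
    have t1: "transpose a b \<in> parabolic J" using Suc ab by auto
    have t2: "transpose b (Suc b) \<in> parabolic J"
      using parabolic.par_step[OF parabolic.par_id, of b J] Suc.prems ab by auto
    have e: "transpose a (Suc b) = transpose b (Suc b) \<circ> transpose a b \<circ> transpose b (Suc b)"
      using ab by (auto simp: fun_eq_iff transpose_def)
    show ?thesis unfolding e by (intro par_comp t1 t2)
  qed
qed

lemma par_sub: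
  assumes p: "is_partition n la"
  shows "s \<in> parabolic (Jl n la) \<Longrightarrow> s \<in> col_group n la (tab la)"
proof (induction s rule: parabolic.induct)
  case par_id then show ?case using permutes_id[of "{0..<n}"] by (simp add: col_group_def id_def)
next
  case (par_step q i)
  have tC: "transpose i (Suc i) \<in> col_group n la (tab la)"
  proof -
    have i: "Suc i < n" "colof la i = colof la (Suc i)" using par_step by (auto simp: Jl_def)
    have "transpose i (Suc i) permutes {0..<n}" using i by (intro permutes_swap_id) auto
    moreover have "colof la (transpose i (Suc i) x) = colof la x" for x
      using i by (auto simp: transpose_def)
    ultimately show ?thesis by (simp add: col_group_def colof_def)
  qed
  show ?case by (rule colgrp_comp[OF tC par_step.IH])
qed

lemma sigA:
  assumes p: "is_partition n la"
  shows "parabolic (Jl n la) \<in> sign_signature n (specht n la)"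
proof -
  let ?v = "polytabloid n la (tab la)"
  have b: "bij_betw (tab la) (cells la) {0..<n}" by (rule tab_bij[OF p])
  have "?v \<in> specht n la"
    unfolding specht_def
    by (rule CollectI, rule exI[of _ "{tab la}"], rule exI[of _ "\<lambda>_. 1"]) (use b in \<open>auto simp: tableaux_def\<close>)
  moreover have "?v \<noteq> (\<lambda>T. 0)" using polytabloid_nz[OF b] by (metis zero_neq_one)
  moreover have "\<forall>s\<in>parabolic (Jl n la). perm_act s ?v = (\<lambda>T. of_int (sign s) * ?v T)"
    using polytabloid_act par_sub[OF p] by blast
  moreover have "Jl n la \<subseteq> {i. Suc i < n}" by (auto simp: Jl_def)
  ultimately show ?thesis unfolding sign_signature_def by blast
qed



lemma support:
  assumes "v \<in> specht n mu" "v T \<noteq> 0"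
  obtains t p where "bij_betw t (cells mu) {0..<n}" "p permutes {0..<n}"
    "T = row_tabloid n mu t \<circ> inv p"
proof -
  obtain S c where S: "finite S" "S \<subseteq> tableaux n mu" "v = (\<lambda>T. \<Sum>t\<in>S. c t * polytabloid n mu t T)"
    using assms(1) by (auto simp: specht_def)
  have "\<exists>t\<in>S. c t * polytabloid n mu t T \<noteq> 0"
  proof (rule ccontr)
    assume "\<not> ?thesis"
    then have "v T = 0" using S(3) by (simp add: sum.neutral)
    then show False using assms(2) by simp
  qed
  then obtain t where t: "t \<in> S" "polytabloid n mu t T \<noteq> 0" by auto
  have "\<exists>p\<in>col_group n mu t. T = row_tabloid n mu t \<circ> inv p"
  proof (rule ccontr)
    assume "\<not> ?thesis"
    then have "polytabloid n mu t T = 0" unfolding polytabloid_def by (intro sum.neutral) auto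
    then show False using t by simp
  qed
  then obtain p where "p \<in> col_group n mu t" "T = row_tabloid n mu t \<circ> inv p" by auto
  moreover have "bij_betw t (cells mu) {0..<n}" using t S(2) by (auto simp: tableaux_def)
  ultimately show ?thesis using that by (auto simp: col_group_def)
qed

lemma nat_eq_lessI: "(\<And>i. i < (a::nat) \<longleftrightarrow> i < b) \<Longrightarrow> a = b"
  by (metis less_irrefl linorder_neqE_nat)

lemma sigB:
  assumes pl: "is_partition n la" and pm: "is_partition n mu"
    and mem: "parabolic (Jl n la) \<in> sign_signature n (specht n mu)"
  shows "Fs la k \<le> Fs mu k"
proof -
  obtain J' v where J': "parabolic (Jl n la) = parabolic J'" and v: "v \<in> specht n mu"
    and nz: "v \<noteq> (\<lambda>T. 0)" and act: "\<forall>s\<in>parabolic J'. perm_act s v = (\<lambda>T. of_int (sign s) * v T)"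
    using mem unfolding sign_signature_def by blast
  have act': "perm_act s v = (\<lambda>T. of_int (sign s) * v T)" if "s \<in> parabolic (Jl n la)" for s
    using act that J' by blast
  obtain T where T: "v T \<noteq> 0" using nz by auto
  obtain t p where t: "bij_betw t (cells mu) {0..<n}" and pp: "p permutes {0..<n}"
    and Teq: "T = row_tabloid n mu t \<circ> inv p"
    using support[OF v T] by blast
  have injT: "T a \<noteq> T b" if ab: "a < b" "b < n" "colof la a = colof la b" for a b
  proof
    assume e: "T a = T b"
    have "transpose a b \<in> parabolic (Jl n la)"
    proof (rule transp_par[OF ab(1)])
      fix x assume x: "a \<le> x" "x < b"
      have "colof la a \<le> colof la x" "colof la x \<le> colof la (Suc x)" "colof la (Suc x) \<le> colof la b"
        using colof_mono[OF pl, of a x] colof_mono[OF pl, of x "Suc x"] colof_mono[OF pl, of "Suc x" b] x ab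
        by auto
      then show "x \<in> Jl n la" using x ab by (auto simp: Jl_def)
    qed
    then have "perm_act (transpose a b) v T = of_int (sign (transpose a b)) * v T"
      using act' by simp
    moreover have "T \<circ> transpose a b = T" using e by (auto simp: fun_eq_iff transpose_def)
    ultimately have "v T = - v T" using ab by (simp add: perm_act_def sign_swap_id)
    then show False using T by simp
  qed
  let ?cell = "\<lambda>x. inv_into (cells mu) t (inv p x)"
  have ip: "inv p x < n" if "x < n" for x using permutes_in_image[OF permutes_inv[OF pp]] that by auto
  have cellin: "?cell x \<in> cells mu" if "x < n" for x
    using t ip[OF that] by (auto simp: bij_betw_def inv_into_into)
  have Tx: "T x = fst (?cell x)" if "x < n" for x
    using ip[OF that] Teq by (simp add: row_tabloid_def)
  let ?m = "Fs la k"
  have mn: "?m \<le> n" by (rule Fs_le[OF pl])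
  let ?A = "\<lambda>r. {x. x < ?m \<and> T x = r}"
  have c1: "card (?A r) \<le> k" for r
  proof -
    have "inj_on (colof la) (?A r)"
    proof (rule inj_onI)
      fix x y assume "x \<in> ?A r" "y \<in> ?A r" "colof la x = colof la y"
      then show "x = y" using injT mn by (metis (mono_tags, lifting) linorder_neqE_nat mem_Collect_eq order_less_le_trans)
    qed
    moreover have "colof la ` ?A r \<subseteq> {..<k}" using colof_lt[OF pl] by auto
    ultimately show ?thesis by (metis card_inj_on_le card_lessThan finite_lessThan)
  qed
  have c2: "card (?A r) \<le> mu ! r" for r
  proof -
    have "inj_on (\<lambda>x. snd (?cell x)) (?A r)"
    proof (rule inj_onI)
      fix x y assume x: "x \<in> ?A r" and y: "y \<in> ?A r" and e: "snd (?cell x) = snd (?cell y)"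
      have xn: "x < n" "y < n" using x y mn by auto
      have "fst (?cell x) = fst (?cell y)" using Tx xn x y by auto
      then have "?cell x = ?cell y" using e by (simp add: prod_eq_iff)
      then have "t (?cell x) = t (?cell y)" by simp
      moreover have "inv p x \<in> t ` cells mu" "inv p y \<in> t ` cells mu"
        using t ip xn by (auto simp: bij_betw_def)
      ultimately have "inv p x = inv p y" by (simp add: f_inv_into_f)
      then show "x = y" by (metis permutes_inverses(1)[OF pp])
    qed
    moreover have "(\<lambda>x. snd (?cell x)) ` ?A r \<subseteq> {..<mu ! r}"
    proof
      fix z assume "z \<in> (\<lambda>x. snd (?cell x)) ` ?A r"
      then obtain x where x: "x \<in> ?A r" "z = snd (?cell x)" by auto
      have xn: "x < n" using x mn by auto
      have "?cell x \<in> cells mu" by (rule cellin[OF xn])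
      moreover have "fst (?cell x) = r" using Tx xn x by auto
      ultimately show "z \<in> {..<mu ! r}" using x by (auto simp: cells_def split: prod.splits)
    qed
    ultimately show ?thesis by (metis card_inj_on_le card_lessThan finite_lessThan)
  qed
  have sub: "{..<?m} \<subseteq> (\<Union>r\<in>{..<length mu}. ?A r)"
  proof
    fix x assume x: "x \<in> {..<?m}"
    then have xn: "x < n" using mn by auto
    have "T x < length mu" using Tx[OF xn] cellin[OF xn] by (auto simp: cells_def split: prod.splits)
    then show "x \<in> (\<Union>r\<in>{..<length mu}. ?A r)" using x by auto
  qed
  have "?m = card {..<?m}" by simp
  also have "\<dots> \<le> card (\<Union>r\<in>{..<length mu}. ?A r)" by (rule card_mono[OF _ sub]) auto
  also have "\<dots> \<le> (\<Sum>r<length mu. card (?A r))" by (rule card_UN_le) simp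
  also have "\<dots> \<le> (\<Sum>r<length mu. min (mu ! r) k)" by (rule sum_mono) (use c1 c2 in auto)
  also have "\<dots> = Fs mu k" by (simp add: Fs_min)
  finally show ?thesis .
qed

theorem proposition3p10:
  fixes n :: nat and la mu :: "nat list"
  assumes "is_partition n la" and "is_partition n mu" and "la \<noteq> mu"
  shows "sign_signature n (specht n la) \<noteq> sign_signature n (specht n mu)"
proof
  assume eq: "sign_signature n (specht n la) = sign_signature n (specht n mu)"
  have le1: "Fs la k \<le> Fs mu k" for k
    using sigB[OF assms(1,2)] sigA[OF assms(1)] eq by simp
  have le2: "Fs mu k \<le> Fs la k" for k
    using sigB[OF assms(2,1)] sigA[OF assms(2)] eq by simp
  have F: "Fs la k = Fs mu k" for k using le1 le2 by (simp add: order_antisym)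
  have cs: "colsz la j = colsz mu j" for j using F[of "Suc j"] F[of j] by (simp add: Fs_Suc)
  have sl: "sorted_wrt (\<ge>) la" "sorted_wrt (\<ge>) mu" using assms by (auto simp: is_partition_def)
  have len0: "colsz xs 0 = length xs" if "is_partition n xs" for xs
  proof (rule nat_eq_lessI)
    fix i
    have "0 \<notin> set xs" "sorted_wrt (\<ge>) xs" using that by (auto simp: is_partition_def)
    then show "i < colsz xs 0 \<longleftrightarrow> i < length xs"
      using colsz_iff[of xs i 0] by (metis gr0I nth_mem)
  qed
  have len: "length la = length mu" using len0[OF assms(1)] len0[OF assms(2)] cs[of 0] by simp
  have "la = mu"
  proof (rule nth_equalityI[OF len])
    fix i assume i: "i < length la"
    show "la ! i = mu ! i"
    proof (rule nat_eq_lessI)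
      fix j
      show "j < la ! i \<longleftrightarrow> j < mu ! i"
        using colsz_iff[OF sl(1), of i j] colsz_iff[OF sl(2), of i j] cs[of j] i len by auto
    qed
  qed
  then show False using assms(3) by simp
qed

end
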